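(* Let $n=p_1^{\alpha_1}p_2^{\alpha_2}\cdots p_r^{\alpha_r}$, where $r\geq 2$, $\alpha_1,\ldots,\alpha_r$ are positive integers and $p_1<p_2<\cdots<p_r$ are primes. Suppose that at least one of the following holds: (i) $p_1\geq r+1$ and $p_r>r\,p_{r-1}$; (ii) $p_{i+1}>r\,p_i$ for each $i\in\{1,2,\ldots,r-1\}$. Then $\delta(\mathcal{P}(C_n))=\deg(p_r^{\alpha_r})$.
   Context: For a finite group $G$, the power graph $\mathcal{P}(G)$ is the simple undirected graph with vertex set $G$ in which two distinct vertices are adjacent if one is an integral power of the other. $C_n$ denotes the cyclic group of order $n$, identified with $\mathbb{Z}_n=\{0,1,\ldots,n-1\}$, so a positive divisor $d<n$ of $n$ is regarded as the element $d\in\mathbb{Z}_n$. $\deg(a)$ is the degree of vertex $a$ in $\mathcal{P}(C_n)$ and $\delta$ denotes minimum degree. *)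

theory Defs
  imports "HOL-Computational_Algebra.Primes"
begin

text \<open>Power graph of the cyclic group C_n, identified with Z_n = {0,...,n-1} (written additively).
  In a finite cyclic group, integral powers coincide with natural powers.\<close>

definition pg_adj :: "nat \<Rightarrow> nat \<Rightarrow> nat \<Rightarrow> bool" where
  "pg_adj n a b \<longleftrightarrow> a \<noteq> b \<and>
     ((\<exists>k::int. int b = (k * int a) mod int n) \<or> (\<exists>k::int. int a = (k * int b) mod int n))"

definition pg_deg :: "nat \<Rightarrow> nat \<Rightarrow> nat" where
  "pg_deg n a = card {b \<in> {..<n}. pg_adj n a b}"

definition pg_min_deg :: "nat \<Rightarrow> nat" where
  "pg_min_deg n = Min (pg_deg n ` {..<n})"

end

theory Submission
  imports Defs "HOL-Number_Theory.Number_Theory"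
begin


lemma mult_mod_iff:
  fixes n a b :: nat
  assumes "0 < n" "b < n"
  shows "(\<exists>k::int. int b = (k * int a) mod int n) \<longleftrightarrow> gcd a n dvd b"
proof
  assume "\<exists>k::int. int b = (k * int a) mod int n"
  then obtain k where k: "int b = (k * int a) mod int n" by blast
  have "int b = k * int a - int n * ((k * int a) div int n)"
    using k by (simp add: minus_div_mult_eq_mod[symmetric] algebra_simps)
  moreover have "gcd (int a) (int n) dvd k * int a - int n * ((k * int a) div int n)"
    by (intro dvd_diff dvd_mult dvd_mult2) auto
  ultimately have "gcd (int a) (int n) dvd int b" by simp
  thus "gcd a n dvd b" by (metis gcd_int_int_eq int_dvd_int_iff)
next
  assume "gcd a n dvd b"
  then obtain t where t: "b = gcd a n * t" by blast
  obtain u v :: int where uv: "u * int a + v * int n = gcd (int a) (int n)"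
    using bezout_int by blast
  have "int b = (u * int a + v * int n) * int t" using t uv by (simp add: gcd_int_int_eq)
  hence "int b mod int n = ((t * u) * int a) mod int n"
    by (simp add: algebra_simps mod_add_left_eq[symmetric])
  moreover have "int b mod int n = int b" using assms by simp
  ultimately show "\<exists>k::int. int b = (k * int a) mod int n" by metis
qed

lemma adj_iff:
  fixes n a b :: nat
  assumes "0 < n" "a < n" "b < n"
  shows "pg_adj n a b \<longleftrightarrow> a \<noteq> b \<and> (gcd a n dvd gcd b n \<or> gcd b n dvd gcd a n)"
  unfolding pg_adj_def using assms
  by (simp add: mult_mod_iff)

lemma card_gcd_lt:
  fixes n c :: nat
  assumes "0 < n" "c dvd n"
  shows "card {b\<in>{..<n}. gcd b n = c} = totient (n div c)"
proof -
  have "bij_betw (\<lambda>k. k mod n) {k\<in>{0<..n}. gcd k n = c} {b\<in>{..<n}. gcd b n = c}"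
  proof (rule bij_betw_byWitness[where f' = "\<lambda>b. if b = 0 then n else b"])
    show "\<forall>a\<in>{k \<in> {0<..n}. gcd k n = c}. (if a mod n = 0 then n else a mod n) = a"
      using assms by (auto simp: le_less)
    show "\<forall>a'\<in>{b \<in> {..<n}. gcd b n = c}. (if a' = 0 then n else a') mod n = a'"
      using assms by auto
    show "(\<lambda>k. k mod n) ` {k \<in> {0<..n}. gcd k n = c} \<subseteq> {b \<in> {..<n}. gcd b n = c}"
      using assms by (auto simp: gcd.commute[of _ n] gcd_mod_right) 
    show "(\<lambda>b. if b = 0 then n else b) ` {b \<in> {..<n}. gcd b n = c} \<subseteq> {k \<in> {0<..n}. gcd k n = c}"
      using assms by auto
  qed
  hence "card {b\<in>{..<n}. gcd b n = c} = card {k\<in>{0<..n}. gcd k n = c}"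
    by (simp add: bij_betw_same_card)
  thus ?thesis using card_gcd_eq_totient[OF assms] by simp
qed

definition DD :: "nat \<Rightarrow> nat \<Rightarrow> nat set" where
  "DD n c = {c'. c' dvd n \<and> (c dvd c' \<or> c' dvd c)}"

lemma deg_formula:
  fixes n a :: nat
  assumes "0 < n" "a < n"
  shows "pg_deg n a + 1 = (\<Sum>c\<in>DD n (gcd a n). totient (n div c))"
proof -
  let ?g = "gcd a n"
  let ?S = "{b\<in>{..<n}. gcd b n \<in> DD n ?g}"
  have fD: "finite (DD n ?g)" unfolding DD_def using assms
    by (rule_tac finite_subset[of _ "{d. d dvd n}"]) auto
  have "{b \<in> {..<n}. pg_adj n a b} = ?S - {a}"
    using assms by (auto simp: adj_iff DD_def)
  moreover have "a \<in> ?S" using assms by (auto simp: DD_def)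
  ultimately have "pg_deg n a + 1 = card ?S"
    unfolding pg_deg_def using card_Suc_Diff1[of ?S a] by simp
  also have "?S = (\<Union>c\<in>DD n ?g. {b\<in>{..<n}. gcd b n = c})" by auto
  also have "card \<dots> = (\<Sum>c\<in>DD n ?g. card {b\<in>{..<n}. gcd b n = c})"
    by (rule card_UN_disjoint) (use fD in auto)
  also have "\<dots> = (\<Sum>c\<in>DD n ?g. totient (n div c))"
    by (rule sum.cong) (use assms card_gcd_lt[OF assms(1)] in \<open>auto simp: DD_def\<close>)
  finally show ?thesis .
qed



lemma totient_div_prime:
  fixes p n :: nat
  assumes "prime p" "p dvd n"
  shows "totient n \<le> p * totient (n div p)"
proof -
  obtain x where x: "n = p * x" using assms by blast
  have tp: "totient p > 0" using assms prime_gt_0_nat by simp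
  have "totient (p * x) * totient (gcd p x) = totient p * totient x * gcd p x"
    by (rule totient_gcd)
  show ?thesis
  proof (cases "p dvd x")
    case True
    hence "gcd p x = p" by simp
    with \<open>totient (p * x) * totient (gcd p x) = _\<close> tp have "totient (p*x) = totient x * p"
      by (metis mult.commute mult_left_cancel not_gr0 mult.assoc)
    thus ?thesis using x assms prime_gt_0_nat by simp
  next
    case False
    hence "coprime p x" using assms prime_imp_coprime by blast
    hence "totient (p*x) = totient p * totient x" by (rule totient_mult_coprime)
    moreover have "totient p \<le> p" by (rule totient_le)
    ultimately show ?thesis using x assms prime_gt_0_nat by simp
  qed
qed

lemma sum_totient_pp:
  fixes p :: nat
  assumes "prime p"
  shows "(\<Sum>k\<in>{1..a}. totient (p^k)) + 1 = p^a"
proof (induction a)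
  case 0 then show ?case by simp
next
  case (Suc a)
  have "(\<Sum>k\<in>{1..Suc a}. totient (p^k)) = (\<Sum>k\<in>{1..a}. totient (p^k)) + totient (p ^ Suc a)"
    by simp
  also have "totient (p ^ Suc a) = p^a * (p - 1)" using assms by (rule totient_prime_power_Suc)
  finally have "(\<Sum>k\<in>{1..Suc a}. totient (p^k)) + 1 = p^a + p^a * (p - 1)" using Suc by simp
  also have "\<dots> = p ^ Suc a" using prime_gt_0_nat[OF assms]
    by (cases p) (auto simp: algebra_simps)
  finally show ?case .
qed

lemma bernoulli_prod:
  fixes x :: "'a \<Rightarrow> real"
  assumes "finite S" "\<forall>i\<in>S. 0 \<le> x i \<and> x i \<le> 1"
  shows "1 - sum x S \<le> (\<Prod>i\<in>S. 1 - x i)"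
  using assms
proof (induction S rule: finite_induct)
  case empty then show ?case by simp
next
  case (insert a S)
  have h: "1 - sum x S \<le> (\<Prod>i\<in>S. 1 - x i)" using insert by auto
  have xa: "0 \<le> x a" "x a \<le> 1" using insert by auto
  have sS: "0 \<le> sum x S" using insert by (intro sum_nonneg) auto
  have "(1 - x a) * (1 - sum x S) \<le> (1 - x a) * (\<Prod>i\<in>S. 1 - x i)"
    using h xa by (intro mult_left_mono) auto
  moreover have "1 - (x a + sum x S) \<le> (1 - x a) * (1 - sum x S)"
    using xa sS by (simp add: algebra_simps)
  ultimately show ?case using insert by simp
qed

definition EE :: "nat \<Rightarrow> nat \<Rightarrow> nat \<Rightarrow> nat set" where
  "EE n p \<alpha> = {c. c dvd n \<and> p^\<alpha> dvd c} \<union> (\<lambda>k. p^(\<alpha>-k)) ` {1..\<alpha>}"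

lemma EE_sum:
  fixes p m \<alpha> n :: nat
  assumes "prime p" "0 < m" "\<not> p dvd m" "n = m * p^\<alpha>"
  shows "(\<Sum>c\<in>EE n p \<alpha>. totient (n div c)) = m + totient m * (p^\<alpha> - 1)"
proof -
  have p1: "p > 1" using assms prime_gt_1_nat by simp
  let ?A = "{c. c dvd n \<and> p^\<alpha> dvd c}"
  let ?B = "(\<lambda>k. p^(\<alpha>-k)) ` {1..\<alpha>}"
  have n0: "n > 0" using assms p1 by simp
  have fA: "finite ?A" using n0 by (rule_tac finite_subset[of _ "{d. d dvd n}"]) auto
  have dis: "?A \<inter> ?B = {}"
  proof (safe)
    fix k assume k: "k \<in> {1..\<alpha>}" "p^\<alpha> dvd p^(\<alpha>-k)"
    hence "p^\<alpha> \<le> p^(\<alpha>-k)" using p1 by (intro dvd_imp_le) auto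
    moreover have "p^(\<alpha>-k) < p^\<alpha>" using p1 k by (intro power_strict_increasing) auto
    ultimately show "p^(\<alpha>-k) \<in> {}" by simp
  qed
  have sA: "(\<Sum>c\<in>?A. totient (n div c)) = m"
  proof -
    have F: "n div (n div f) = f \<and> n div f \<in> ?A" if f: "f \<in> {f. f dvd m}" for f
    proof -
      obtain g where g: "m = f * g" using f by blast
      have f0: "f > 0" "g > 0" using g assms by auto
      have nf: "n = (g * p^\<alpha>) * f" using assms g by (simp add: algebra_simps)
      have q: "g * p^\<alpha> > 0" using f0 p1 by simp
      have d1: "n div f = g * p^\<alpha>" using nf f0 by simp
      have d2: "n div (g * p^\<alpha>) = f" using nf q by simp
      show ?thesis using d1 d2 nf by auto
    qed
    have C: "n div c \<in> {f. f dvd m} \<and> n div (n div c) = c" if c: "c \<in> ?A" for c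
    proof -
      obtain g where g: "c = p^\<alpha> * g" using c by blast
      obtain h where h: "n = c * h" using c by blast
      have "m = g * h" using h g assms p1 by simp
      moreover have "c > 0" "h > 0" using h n0 by auto
      moreover hence "n div c = h" using h by simp
      ultimately show ?thesis using h by auto
    qed
    have "(\<Sum>c\<in>?A. totient (n div c)) = (\<Sum>f | f dvd m. totient f)"
      by (rule sum.reindex_bij_witness[of _ "\<lambda>f. n div f" "\<lambda>c. n div c"]) (use F C in blast)+
    also have "\<dots> = m" by (rule totient_divisor_sum)
    finally show ?thesis .
  qed
  have sB: "(\<Sum>c\<in>?B. totient (n div c)) = totient m * (p^\<alpha> - 1)"
  proof -
    have inj: "inj_on (\<lambda>k. p^(\<alpha>-k)) {1..\<alpha>}"
    proof (rule inj_onI)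
      fix x y assume "x \<in> {1..\<alpha>}" "y \<in> {1..\<alpha>}" "p^(\<alpha>-x) = p^(\<alpha>-y)"
      thus "x = y" using p1 by (simp add: power_inject_exp) linarith
    qed
    have "(\<Sum>c\<in>?B. totient (n div c)) = (\<Sum>k\<in>{1..\<alpha>}. totient (n div p^(\<alpha>-k)))"
      using sum.reindex[OF inj, of "\<lambda>c. totient (n div c)"] by (simp add: comp_def)
    also have "\<dots> = (\<Sum>k\<in>{1..\<alpha>}. totient m * totient (p^k))"
    proof (rule sum.cong[OF refl])
      fix k assume k: "k \<in> {1..\<alpha>}"
      have "p^\<alpha> = p^(\<alpha>-k) * p^k" using k by (simp add: power_add[symmetric])
      hence "n div p^(\<alpha>-k) = m * p^k" using assms p1 by simp
      moreover have "coprime m (p^k)" using assms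
        using prime_imp_coprime[OF assms(1)] coprime_commute by (simp add: coprime_commute)
      ultimately show "totient (n div p^(\<alpha>-k)) = totient m * totient (p^k)"
        by (simp add: totient_mult_coprime)
    qed
    also have "\<dots> = totient m * (\<Sum>k\<in>{1..\<alpha>}. totient (p^k))" by (simp add: sum_distrib_left)
    also have "(\<Sum>k\<in>{1..\<alpha>}. totient (p^k)) = p^\<alpha> - 1"
      using sum_totient_pp[OF assms(1), of \<alpha>] by simp
    finally show ?thesis .
  qed
  have "(\<Sum>c\<in>EE n p \<alpha>. totient (n div c)) = (\<Sum>c\<in>?A. totient (n div c)) + (\<Sum>c\<in>?B. totient (n div c))"
    unfolding EE_def by (rule sum.union_disjoint) (use fA dis in auto)
  thus ?thesis using sA sB by simp
qed

lemma DD_EE: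
  fixes p m \<alpha> n :: nat
  assumes "prime p" "n = m * p^\<alpha>" "0 < m"
  shows "DD n (p^\<alpha>) = EE n p \<alpha>"
proof
  show "DD n (p^\<alpha>) \<subseteq> EE n p \<alpha>"
  proof
    fix c assume "c \<in> DD n (p^\<alpha>)"
    hence c: "c dvd n" "p^\<alpha> dvd c \<or> c dvd p^\<alpha>" unfolding DD_def by auto
    show "c \<in> EE n p \<alpha>"
    proof (cases "p^\<alpha> dvd c")
      case True thus ?thesis using c unfolding EE_def by auto
    next
      case False
      then obtain i where i: "i \<le> \<alpha>" "c = p^i" using c divides_primepow_nat[OF assms(1)] by auto
      have "i < \<alpha>" using i False by (metis dvd_refl le_neq_implies_less)
      hence "c = p^(\<alpha> - (\<alpha> - i))" "\<alpha> - i \<in> {1..\<alpha>}" using i by auto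
      thus ?thesis unfolding EE_def by blast
    qed
  qed
  show "EE n p \<alpha> \<subseteq> DD n (p^\<alpha>)"
    unfolding EE_def DD_def using assms by (auto simp: le_imp_power_dvd)
qed

lemma EE_sub_DD:
  fixes p m \<alpha> n w :: nat
  assumes "prime p" "n = m * p^\<alpha>" "w \<le> \<alpha>"
  shows "EE n p \<alpha> \<subseteq> DD n (p^w)"
proof
  fix c assume "c \<in> EE n p \<alpha>"
  then consider "c dvd n" "p^\<alpha> dvd c" | k where "k \<in> {1..\<alpha>}" "c = p^(\<alpha>-k)"
    unfolding EE_def by auto
  thus "c \<in> DD n (p^w)"
  proof cases
    case 1
    have "p^w dvd p^\<alpha>" using assms by (simp add: le_imp_power_dvd)
    thus ?thesis using 1 unfolding DD_def by (auto intro: dvd_trans)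
  next
    case 2
    have "c dvd n" using 2 assms by (auto simp: le_imp_power_dvd)
    moreover have "p^w dvd c \<or> c dvd p^w" using 2
      by (cases "w \<le> \<alpha> - k") (auto simp: le_imp_power_dvd)
    ultimately show ?thesis unfolding DD_def by auto
  qed
qed



lemma mono_chain:
  fixes p :: "nat \<Rightarrow> nat"
  assumes "\<forall>i\<in>{1..<r}. p i < p (i + 1)" "1 \<le> i" "i < j" "j \<le> r"
  shows "p i < p j"
  using assms(3,4)
proof (induction j)
  case 0 then show ?case by simp
next
  case (Suc j)
  show ?case
  proof (cases "i = j")
    case True then show ?thesis using assms(1,2) Suc by auto
  next
    case False
    hence "p i < p j" using Suc by auto
    moreover have "p j < p (Suc j)" using assms(1,2) Suc False by auto
    ultimately show ?thesis by simp
  qed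
qed

lemma K_ineq:
  fixes p :: "nat \<Rightarrow> nat" and r :: nat
  assumes r2: "r \<ge> 2"
    and pr: "\<forall>i\<in>{1..r}. prime (p i)"
    and inc: "\<forall>i\<in>{1..<r}. p i < p (i + 1)"
    and cond: "(p 1 \<ge> r + 1 \<and> p r > r * p (r - 1)) \<or> (\<forall>i\<in>{1..<r}. p (i + 1) > r * p i)"
  shows "1 \<le> real r * (\<Prod>i\<in>{1..<r}. 1 - 1 / real (p i))"
proof -
  have mono: "p i \<le> p j" if "1 \<le> i" "i \<le> j" "j \<le> r" for i j
    using mono_chain[OF inc, of i j] that by (cases "i = j") auto
  have p2: "p i \<ge> 2" if "i \<in> {1..r}" for i using pr that prime_ge_2_nat by auto
  from cond show ?thesis
  proof
    assume c: "p 1 \<ge> r + 1 \<and> p r > r * p (r - 1)"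
    have ge: "real (p i) \<ge> real r + 1" if "i \<in> {1..<r}" for i
      using mono[of 1 i] c that by auto
    have x: "\<forall>i\<in>{1..<r}. 0 \<le> 1 / real (p i) \<and> 1 / real (p i) \<le> 1"
    proof
      fix i assume "i \<in> {1..<r}"
      hence "real (p i) \<ge> 2" using p2[of i] by auto
      thus "0 \<le> 1 / real (p i) \<and> 1 / real (p i) \<le> 1" by simp
    qed
    have "(\<Sum>i\<in>{1..<r}. 1 / real (p i)) \<le> (\<Sum>i\<in>{1..<r}. 1 / (real r + 1))" (is "sum _ ?I \<le> sum (\<lambda>_. 1 / ?b) _")
    proof (rule sum_mono)
      fix i assume "i \<in> ?I"
      hence g: "real (p i) \<ge> ?b" by (rule ge)
      have "0 < ?b" by simp
      thus "1 / real (p i) \<le> 1 / ?b" using g by (simp add: frac_le)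
    qed
    also have "\<dots> = (real r - 1) / (real r + 1)" using r2 by (simp add: of_nat_diff)
    finally have s: "(\<Sum>i\<in>{1..<r}. 1 / real (p i)) \<le> (real r - 1) / (real r + 1)" .
    have "1 - (real r - 1) / (real r + 1) \<le> (\<Prod>i\<in>{1..<r}. 1 - 1 / real (p i))"
      using bernoulli_prod[OF _ x] s by simp
    moreover have "1 - (real r - 1) / (real r + 1) = 2 / (real r + 1)" by (simp add: field_simps)
    moreover have "1 \<le> real r * (2 / (real r + 1))" using r2 by (simp add: field_simps)
    ultimately show ?thesis using r2
      by (smt (verit) mult_left_mono of_nat_0_le_iff)
  next
    assume c: "\<forall>i\<in>{1..<r}. p (i + 1) > r * p i"
    have ge: "real (p i) \<ge> 2 * real r + 1" if "i \<in> {2..<r}" for i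
    proof -
      have "1 \<in> {1..<r}" using r2 by simp
      hence "p (1+1) > r * p 1" using c by blast
      hence "p 2 > r * p 1" by (simp add: numeral_2_eq_2)
      moreover have "p 1 \<ge> 2" using p2 r2 by auto
      ultimately have "r * 2 \<le> r * p 1" by (intro mult_le_mono2)
      with \<open>p 2 > r * p 1\<close> have "p 2 \<ge> 2 * r + 1" by linarith
      thus ?thesis using mono[of 2 i] that by auto
    qed
    have x: "\<forall>i\<in>{2..<r}. 0 \<le> 1 / real (p i) \<and> 1 / real (p i) \<le> 1"
    proof
      fix i assume "i \<in> {2..<r}"
      hence "real (p i) \<ge> 2" using p2[of i] by auto
      thus "0 \<le> 1 / real (p i) \<and> 1 / real (p i) \<le> 1" by simp
    qed
    have "(\<Sum>i\<in>{2..<r}. 1 / real (p i)) \<le> (\<Sum>i\<in>{2..<r}. 1 / (2 * real r + 1))" (is "sum _ ?I \<le> sum (\<lambda>_. 1 / ?b) _")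
    proof (rule sum_mono)
      fix i assume "i \<in> ?I"
      hence g: "real (p i) \<ge> ?b" by (rule ge)
      have "0 < ?b" by simp
      thus "1 / real (p i) \<le> 1 / ?b" using g by (simp add: frac_le)
    qed
    also have "\<dots> = (real r - 2) / (2 * real r + 1)" using r2 by (simp add: of_nat_diff)
    finally have s: "(\<Sum>i\<in>{2..<r}. 1 / real (p i)) \<le> (real r - 2) / (2 * real r + 1)" .
    have P2: "1 - (real r - 2) / (2 * real r + 1) \<le> (\<Prod>i\<in>{2..<r}. 1 - 1 / real (p i))"
      using bernoulli_prod[OF _ x] s by simp
    have eq: "1 - (real r - 2) / (2 * real r + 1) = (real r + 3) / (2 * real r + 1)"
      by (simp add: field_simps)
    have h1: "1 - 1 / real (p 1) \<ge> 1 / 2" using p2[of 1] r2 by (auto simp: field_simps)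
    have split: "{1..<r} = insert 1 {2..<r}" using r2 by auto
    have "(\<Prod>i\<in>{1..<r}. 1 - 1 / real (p i)) = (1 - 1 / real (p 1)) * (\<Prod>i\<in>{2..<r}. 1 - 1 / real (p i))"
      unfolding split by (subst prod.insert) auto
    also have "\<dots> \<ge> (1/2) * ((real r + 3) / (2 * real r + 1))"
      using h1 P2 eq by (intro mult_mono) auto
    finally have "(\<Prod>i\<in>{1..<r}. 1 - 1 / real (p i)) \<ge> (1/2) * ((real r + 3) / (2 * real r + 1))" .
    moreover have "1 \<le> real r * ((1/2) * ((real r + 3) / (2 * real r + 1)))"
    proof -
      have "real r * (real r + 3) \<ge> 2 * (2 * real r + 1)"
      proof -
        have "(real r - 2) * (real r + 1) \<ge> 0" using r2 by simp
        thus ?thesis by (simp add: algebra_simps)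
      qed
      thus ?thesis by (simp add: field_simps)
    qed
    ultimately show ?thesis using r2
      by (smt (verit) mult_left_mono of_nat_0_le_iff)
  qed
qed


lemma arith1:
  fixes m t Q P r X :: nat
  assumes "m \<le> r * t" "r * t * Q \<le> X" "Q \<ge> 1" "P \<ge> 1" "r \<ge> 1"
  shows "m + t * (Q * P - 1) \<le> t * (Q * (P - 1)) + X"
proof -
  have "int (t * (Q * P - 1)) = int t * int Q * int P - int t" using assms
    by (simp add: of_nat_diff algebra_simps)
  moreover have "int (t * (Q * (P - 1))) = int t * int Q * int P - int t * int Q" using assms
    by (simp add: of_nat_diff algebra_simps)
  moreover have "0 \<le> int t * (int r - 1) * (int Q - 1)" using assms by simp
  moreover have "int m \<le> int r * int t" "int r * int t * int Q \<le> int X" using assms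
    by (metis of_nat_le_iff of_nat_mult)+
  ultimately have "int m + int (t * (Q * P - 1)) \<le> int (t * (Q * (P - 1))) + int X"
    by (simp add: algebra_simps)
  thus ?thesis by linarith
qed


theorem corollary1p4:
  fixes n r :: nat and p \<alpha> :: "nat \<Rightarrow> nat"
  assumes "r \<ge> 2"
    and "\<forall>i\<in>{1..r}. prime (p i) \<and> \<alpha> i > 0"
    and "\<forall>i\<in>{1..<r}. p i < p (i + 1)"
    and "n = (\<Prod>i=1..r. p i ^ \<alpha> i)"
    and "(p 1 \<ge> r + 1 \<and> p r > r * p (r - 1)) \<or> (\<forall>i\<in>{1..<r}. p (i + 1) > r * p i)"
  shows "pg_min_deg n = pg_deg n (p r ^ \<alpha> r)"
proof -
  note r2 = assms(1) and inc = assms(3) and cond = assms(5)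
  have pr: "\<forall>i\<in>{1..r}. prime (p i)" using assms(2) by auto
  have ap: "\<forall>i\<in>{1..r}. \<alpha> i > 0" using assms(2) by auto
  define N where "N = p r ^ \<alpha> r"
  define m where "m = (\<Prod>i\<in>{1..<r}. p i ^ \<alpha> i)"
  define P where "P = p r"
  have Pp: "prime P" using pr r2 P_def by auto
  have P1: "P > 1" using Pp prime_gt_1_nat by blast
  have mono: "p i < p j" if "1 \<le> i" "i < j" "j \<le> r" for i j
    using mono_chain[OF inc] that by blast
  have inj: "i = j" if "i \<in> {1..r}" "j \<in> {1..r}" "p i = p j" for i j
    using mono[of i j] mono[of j i] that by (cases i j rule: linorder_cases) auto
  have nmN: "n = m * N"
  proof -
    have "{1..r} = insert r {1..<r}" using r2 by auto
    thus ?thesis using assms(4) unfolding m_def N_def by (simp add: mult.commute)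
  qed
  have m0: "m > 0" unfolding m_def using pr by (auto intro!: prod_pos simp: prime_gt_0_nat)
  have mdiv: "\<exists>i\<in>{1..<r}. q = p i" if q: "prime q" "q dvd m" for q
  proof -
    obtain i where i: "i \<in> {1..<r}" "q dvd p i ^ \<alpha> i"
      using q prime_dvd_prod_iff[of "{1..<r}" q "\<lambda>i. p i ^ \<alpha> i"] unfolding m_def by auto
    hence "q dvd p i" using q prime_dvd_power by blast
    hence "q = p i" using q pr i by (intro primes_dvd_imp_eq) auto
    thus ?thesis using i by blast
  qed
  have Pm: "\<not> P dvd m"
  proof
    assume "P dvd m"
    then obtain i where "i \<in> {1..<r}" "P = p i" using mdiv Pp by blast
    thus False using inj[of i r] r2 P_def by auto
  qed
  have mN: "coprime m N" unfolding N_def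
    using prime_imp_coprime[OF Pp] Pm P_def by (simp add: coprime_commute)
  have n0: "n > 0" using nmN m0 P1 N_def P_def by simp
  have tm: "totient m = (\<Prod>i\<in>{1..<r}. totient (p i ^ \<alpha> i))"
    unfolding m_def
  proof (rule totient_prod_coprime)
    show "pairwise coprime ((\<lambda>i. p i ^ \<alpha> i) ` {1..<r})"
    proof (rule pairwiseI, clarify)
      fix i j assume ij: "i \<in> {1..<r}" "j \<in> {1..<r}" "p i ^ \<alpha> i \<noteq> p j ^ \<alpha> j"
      hence "p i \<noteq> p j" using inj[of i j] by auto
      hence "coprime (p i) (p j)" using pr ij by (intro primes_coprime) auto
      thus "coprime (p i ^ \<alpha> i) (p j ^ \<alpha> j)" by simp
    qed
    show "inj_on (\<lambda>i. p i ^ \<alpha> i) {1..<r}"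
    proof (rule inj_onI)
      fix i j assume ij: "i \<in> {1..<r}" "j \<in> {1..<r}" "p i ^ \<alpha> i = p j ^ \<alpha> j"
      hence "p i = p j" using pr ap by (intro prime_power_eq_imp_eq[of "p i" "p j" "\<alpha> i" "\<alpha> j"]) auto
      thus "i = j" using inj ij by auto
    qed
  qed
  have K: "m \<le> r * totient m"
  proof -
    have "real (totient m) = (\<Prod>i\<in>{1..<r}. real (p i ^ \<alpha> i) * (1 - 1 / real (p i)))"
      unfolding tm of_nat_prod
    proof (rule prod.cong[OF refl])
      fix i assume i: "i \<in> {1..<r}"
      have pi: "prime (p i)" "\<alpha> i > 0" using pr ap i by auto
      have "totient (p i ^ \<alpha> i) = p i ^ (\<alpha> i - 1) * (p i - 1)" using pi by (rule totient_prime_power)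
      moreover have "p i ^ \<alpha> i = p i ^ (\<alpha> i - 1) * p i" using pi by (cases "\<alpha> i") auto
      moreover have "p i \<ge> 1" using pi prime_ge_1_nat by blast
      ultimately show "real (totient (p i ^ \<alpha> i)) = real (p i ^ \<alpha> i) * (1 - 1 / real (p i))"
        by (simp add: of_nat_diff field_simps)
    qed
    also have "\<dots> = real m * (\<Prod>i\<in>{1..<r}. 1 - 1 / real (p i))"
      unfolding m_def of_nat_prod by (simp add: prod.distrib)
    finally have "real (totient m) = real m * (\<Prod>i\<in>{1..<r}. 1 - 1 / real (p i))" .
    hence "real r * real (totient m) = real m * (real r * (\<Prod>i\<in>{1..<r}. 1 - 1 / real (p i)))"
      by (simp add: algebra_simps)
    also have "\<dots> \<ge> real m * 1"
      using K_ineq[OF r2 pr inc cond] by (intro mult_left_mono) auto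
    finally have "real m \<le> real (r * totient m)" by simp
    thus ?thesis by linarith
  qed
  have C1: "r * p (r - 1) < P"
  proof (cases "\<forall>i\<in>{1..<r}. r * p i < p (i + 1)")
    case True
    moreover have "r - 1 \<in> {1..<r}" using r2 by auto
    ultimately have "r * p (r - 1) < p (r - 1 + 1)" by blast
    thus "r * p (r - 1) < P" using P_def r2 by simp
  next
    case False thus ?thesis using cond P_def by auto
  qed
  have pile: "p i \<le> p (r - 1)" if "i \<in> {1..<r}" for i
    using mono[of i "r - 1"] that by (cases "i = r - 1") (auto, linarith)
  have gN: "gcd N n = N" using nmN by simp
  have NP: "N = P ^ \<alpha> r" using N_def P_def by simp
  have degN: "pg_deg n N + 1 = m + totient m * (N - 1)"
  proof -
    have "N < n" using nmN m0 proof -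
      have "m \<ge> 2"
      proof -
        have "1 \<in> {1..<r}" using r2 by simp
        hence "p 1 ^ \<alpha> 1 dvd m" unfolding m_def by (intro dvd_prodI) auto
        moreover have "p 1 ^ \<alpha> 1 \<ge> 2"
        proof -
          have a: "prime (p 1)" "\<alpha> 1 > 0" using pr ap r2 by auto
          hence "p 1 \<ge> 2" using prime_ge_2_nat by blast
          moreover have "p 1 ^ 1 \<le> p 1 ^ \<alpha> 1" using a \<open>p 1 \<ge> 2\<close>
            by (intro power_increasing) auto
          ultimately show ?thesis by simp
        qed
        ultimately show ?thesis using m0 dvd_imp_le[of "p 1 ^ \<alpha> 1" m] by linarith
      qed
      thus ?thesis using nmN N_def P1 P_def by simp
    qed
    hence "pg_deg n N + 1 = (\<Sum>c\<in>DD n N. totient (n div c))" using deg_formula[OF n0] gN by simp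
    also have "DD n N = EE n P (\<alpha> r)" using DD_EE[OF Pp _ m0] nmN NP by simp
    also have "(\<Sum>c\<in>EE n P (\<alpha> r). totient (n div c)) = m + totient m * (N - 1)"
      using EE_sum[OF Pp m0 Pm] nmN NP by simp
    finally show ?thesis .
  qed
  have low: "pg_deg n N \<le> pg_deg n a" if a: "a < n" for a
  proof -
    let ?c = "gcd a n"
    have fD: "finite (DD n ?c)" unfolding DD_def using n0
      by (rule_tac finite_subset[of _ "{d. d dvd n}"]) auto
    have F: "pg_deg n a + 1 = (\<Sum>c\<in>DD n ?c. totient (n div c))" by (rule deg_formula[OF n0 a])
    show ?thesis
    proof (cases "\<exists>i\<in>{1..<r}. p i dvd ?c")
      case True
      then obtain i where i: "i \<in> {1..<r}" "p i dvd ?c" by blast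
      define q where "q = p i"
      have qp: "prime q" using pr i q_def by auto
      have q1: "q > 1" using qp prime_gt_1_nat by blast
      have qn: "q dvd n" using i q_def dvd_trans[of q ?c n] by auto
      have sub: "{1, q} \<subseteq> DD n ?c" unfolding DD_def using i qn q_def by auto
      have "(\<Sum>c\<in>{1,q}. totient (n div c)) \<le> (\<Sum>c\<in>DD n ?c. totient (n div c))"
        by (rule sum_mono2[OF fD sub]) auto
      moreover have "(\<Sum>c\<in>{1,q}. totient (n div c)) = totient n + totient (n div q)"
        using q1 by simp
      moreover have "m + totient m * (N - 1) \<le> totient n + totient (n div q)"
      proof -
        define Q where "Q = P ^ (\<alpha> r - 1)"
        have ar: "\<alpha> r > 0" using ap r2 by auto
        have NQ: "N = Q * P" unfolding Q_def NP using ar by (cases "\<alpha> r") auto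
        have Q1: "Q \<ge> 1" unfolding Q_def using P1 by simp
        have tN: "totient N = Q * (P - 1)" unfolding NP Q_def using Pp ar by (rule totient_prime_power)
        have tn: "totient n = totient m * (Q * (P - 1))"
          using nmN totient_mult_coprime[OF mN] tN by simp
        have "r * q \<le> r * p (r - 1)" using pile[OF i(1)] q_def by simp
        hence rq: "r * q \<le> P - 1" using C1 by linarith
        have "q * (r * totient m * Q) = totient m * Q * (r * q)" by (simp add: algebra_simps)
        also have "\<dots> \<le> totient m * Q * (P - 1)" using rq by (intro mult_le_mono2)
        also have "\<dots> = totient n" using tn by (simp add: algebra_simps)
        also have "\<dots> \<le> q * totient (n div q)" by (rule totient_div_prime[OF qp qn])
        finally have X: "r * totient m * Q \<le> totient (n div q)" using q1 by simp
        show ?thesis unfolding tn NQ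
          by (rule arith1[OF K X Q1]) (use P1 r2 in auto)
      qed
      ultimately show ?thesis using degN F by linarith
    next
      case False
      define c where "c = gcd a n"
      have cdn: "c dvd n" unfolding c_def by simp
      have nc: "\<not> (\<exists>i\<in>{1..<r}. p i dvd c)" using False c_def by simp
      have cop: "coprime c m"
      proof (rule ccontr)
        assume "\<not> coprime c m"
        hence "gcd c m \<noteq> 1" using coprime_iff_gcd_eq_1[of c m] by blast
        then obtain q where q: "prime q" "q dvd gcd c m" using prime_factor_nat by blast
        have "q dvd c" using dvd_trans[OF q(2) gcd_dvd1] .
        have "q dvd m" using dvd_trans[OF q(2) gcd_dvd2] .
        obtain i where "i \<in> {1..<r}" "q = p i" using mdiv[OF q(1) \<open>q dvd m\<close>] by blast
        thus False using nc \<open>q dvd c\<close> by auto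
      qed
      have "c dvd m * N" using cdn nmN by simp
      hence "c dvd N" using coprime_dvd_mult_right_iff[OF cop] by simp
      hence "c dvd P ^ \<alpha> r" using NP by simp
      then obtain w where w: "w \<le> \<alpha> r" "c = P ^ w" using divides_primepow_nat[OF Pp, THEN iffD1] by blast
      have sub0: "EE n P (\<alpha> r) \<subseteq> DD n (P ^ w)"
        by (rule EE_sub_DD[OF Pp _ w(1), of n m]) (use nmN NP in simp)
      have sub: "EE n P (\<alpha> r) \<subseteq> DD n ?c" using sub0 w(2) c_def by simp
      have "(\<Sum>c\<in>EE n P (\<alpha> r). totient (n div c)) \<le> (\<Sum>c\<in>DD n ?c. totient (n div c))"
        by (rule sum_mono2[OF fD sub]) auto
      moreover have "(\<Sum>c\<in>EE n P (\<alpha> r). totient (n div c)) = m + totient m * (N - 1)"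
        using EE_sum[OF Pp m0 Pm] nmN NP by simp
      ultimately show ?thesis using degN F by linarith
    qed
  qed
  have Nn: "N < n"
  proof -
    have "1 \<in> {1..<r}" using r2 by simp
    hence "p 1 ^ \<alpha> 1 dvd m" unfolding m_def by (intro dvd_prodI) auto
    moreover have "p 1 ^ \<alpha> 1 \<ge> 2"
    proof -
      have a: "prime (p 1)" "\<alpha> 1 > 0" using pr ap r2 by auto
      hence "p 1 \<ge> 2" using prime_ge_2_nat by blast
      moreover have "p 1 ^ 1 \<le> p 1 ^ \<alpha> 1" using a \<open>p 1 \<ge> 2\<close>
        by (intro power_increasing) auto
      ultimately show ?thesis by simp
    qed
    ultimately have "m \<ge> 2" using m0 dvd_imp_le[of "p 1 ^ \<alpha> 1" m] by linarith
    thus ?thesis using nmN N_def P1 P_def by simp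
  qed
  have "pg_min_deg n = pg_deg n N"
    unfolding pg_min_deg_def
  proof (rule Min_eqI)
    show "finite (pg_deg n ` {..<n})" by simp
    show "\<And>y. y \<in> pg_deg n ` {..<n} \<Longrightarrow> pg_deg n N \<le> y" using low by auto
    show "pg_deg n N \<in> pg_deg n ` {..<n}" using Nn by simp
  qed
  thus ?thesis using N_def by simp
qed

end
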